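(* Let $u:\mathbb T_n^d\to(0,1)$, $\mu=\bigotimes_{x\in\mathbb T^d_n}\mathrm{Bern}(u_x)$ on $\Omega_n=\{0,1\}^{\mathbb T_n^d}$, let $f:\Omega_n\to[0,\infty)$ be a density with respect to $\mu$, let $x,y\in\mathbb T_n^d$, and let $h:\Omega_n\to\mathbb R$ satisfy $h(\eta^{x,y})=h(\eta)$ for all $\eta$. Then \[ \int h(\omega_y-\omega_x)f\,d\mu=\int h\,s_{x,y}\,\nabla_{x,y}f\,d\mu-(u_y-u_x)\int h\,\omega_x\omega_y f\,d\mu, \] where $s_{x,y}=\dfrac{\eta_x(1-\eta_y)}{u_x(1-u_y)}$.
   Context: $\mathbb T_n^d=\mathbb Z^d/n\mathbb Z^d$; $\eta^{x,y}$ is the configuration obtained from $\eta$ by exchanging the values $\eta_x,\eta_y$; $\nabla_{x,y}f(\eta)=f(\eta^{x,y})-f(\eta)$; $\omega_x=(\eta_x-u_x)/(u_x(1-u_x))$; a density means $\int f\,d\mu=1$. *)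

theory Defs
  imports Complex_Main
begin

text \<open>Discrete torus T_n^d: points are vectors v with coordinates 0 <= v i < n for i < d,
  and v i = 0 for i >= d (canonical representatives of Z^d / nZ^d).\<close>
definition torus :: "nat \<Rightarrow> nat \<Rightarrow> (nat \<Rightarrow> nat) set" where
  "torus n d = {v. (\<forall>i<d. v i < n) \<and> (\<forall>i. d \<le> i \<longrightarrow> v i = 0)}"

definition configs :: "'s set \<Rightarrow> ('s \<Rightarrow> real) set" where
  "configs S = {\<eta>. (\<forall>z\<in>S. \<eta> z \<in> {0, 1}) \<and> (\<forall>z. z \<notin> S \<longrightarrow> \<eta> z = 0)}"

definition bern_weight :: "('s \<Rightarrow> real) \<Rightarrow> 's set \<Rightarrow> ('s \<Rightarrow> real) \<Rightarrow> real" where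
  "bern_weight u S \<eta> = (\<Prod>z\<in>S. if \<eta> z = 1 then u z else 1 - u z)"

definition bern_integral :: "('s \<Rightarrow> real) \<Rightarrow> 's set \<Rightarrow> (('s \<Rightarrow> real) \<Rightarrow> real) \<Rightarrow> real" where
  "bern_integral u S F = (\<Sum>\<eta>\<in>configs S. bern_weight u S \<eta> * F \<eta>)"

definition swap_conf :: "('s \<Rightarrow> real) \<Rightarrow> 's \<Rightarrow> 's \<Rightarrow> ('s \<Rightarrow> real)" where
  "swap_conf \<eta> x y = \<eta>(x := \<eta> y, y := \<eta> x)"

definition grad :: "'s \<Rightarrow> 's \<Rightarrow> (('s \<Rightarrow> real) \<Rightarrow> real) \<Rightarrow> ('s \<Rightarrow> real) \<Rightarrow> real" where
  "grad x y f \<eta> = f (swap_conf \<eta> x y) - f \<eta>"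

definition omega :: "('s \<Rightarrow> real) \<Rightarrow> 's \<Rightarrow> ('s \<Rightarrow> real) \<Rightarrow> real" where
  "omega u x \<eta> = (\<eta> x - u x) / (u x * (1 - u x))"

definition s_xy :: "('s \<Rightarrow> real) \<Rightarrow> 's \<Rightarrow> 's \<Rightarrow> ('s \<Rightarrow> real) \<Rightarrow> real" where
  "s_xy u x y \<eta> = \<eta> x * (1 - \<eta> y) / (u x * (1 - u y))"

end

theory Submission
  imports Defs "HOL-Library.FuncSet"
begin

lemma torus_finite: "finite (torus n d)"
proof -
  have "torus n d \<subseteq> (\<lambda>g i. if i < d then g i else 0) ` (PiE {..<d} (\<lambda>_. {..<n}))"
  proof
    fix v assume v: "v \<in> torus n d"
    let ?g = "restrict v {..<d}"
    have "?g \<in> PiE {..<d} (\<lambda>_. {..<n})" using v by (auto simp: torus_def)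
    moreover have "v = (\<lambda>i. if i < d then ?g i else 0)" using v by (auto simp: torus_def)
    ultimately show "v \<in> (\<lambda>g i. if i < d then g i else 0) ` (PiE {..<d} (\<lambda>_. {..<n}))" by blast
  qed
  then show ?thesis by (rule finite_subset) (auto intro: finite_PiE)
qed

lemma configs_finite: assumes "finite S" shows "finite (configs S)"
proof -
  have "configs S \<subseteq> (\<lambda>g z. if z \<in> S then g z else 0) ` (PiE S (\<lambda>_. {0,1::real}))"
  proof
    fix v assume v: "v \<in> configs S"
    let ?g = "restrict v S"
    have "?g \<in> PiE S (\<lambda>_. {0,1})" using v by (auto simp: configs_def)
    moreover have "v = (\<lambda>z. if z \<in> S then ?g z else 0)" using v by (auto simp: configs_def)
    ultimately show "v \<in> (\<lambda>g z. if z \<in> S then g z else 0) ` (PiE S (\<lambda>_. {0,1::real}))" by blast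
  qed
  then show ?thesis by (rule finite_subset) (auto intro: finite_PiE assms)
qed

lemma swap_in: assumes "\<eta> \<in> configs S" "x \<in> S" "y \<in> S" shows "swap_conf \<eta> x y \<in> configs S"
  using assms by (auto simp: configs_def swap_conf_def)

lemma swap_swap: "swap_conf (swap_conf \<eta> x y) x y = \<eta>"
  by (auto simp: swap_conf_def)

lemma sum_swap:
  assumes "x \<in> S" "y \<in> S"
  shows "(\<Sum>\<eta>\<in>configs S. g (swap_conf \<eta> x y)) = (\<Sum>\<eta>\<in>configs S. g \<eta>)"
proof -
  have bij: "bij_betw (\<lambda>\<eta>. swap_conf \<eta> x y) (configs S) (configs S)"
    by (rule bij_betw_byWitness[where f' = "\<lambda>\<eta>. swap_conf \<eta> x y"])
       (auto simp: swap_swap swap_in assms)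
  show ?thesis using sum.reindex_bij_betw[OF bij, of g] by simp
qed

lemma weight_split:
  assumes "finite S" "x \<in> S" "y \<in> S" "x \<noteq> y"
  shows "bern_weight u S \<eta> = (if \<eta> x = 1 then u x else 1 - u x) * (if \<eta> y = 1 then u y else 1 - u y)
     * (\<Prod>z\<in>S - {x, y}. if \<eta> z = 1 then u z else 1 - u z)"
proof -
  have "S = insert x (insert y (S - {x,y}))" using assms by auto
  then have "bern_weight u S \<eta> = (\<Prod>z\<in>insert x (insert y (S - {x,y})). if \<eta> z = 1 then u z else 1 - u z)"
    unfolding bern_weight_def by simp
  also have "\<dots> = (if \<eta> x = 1 then u x else 1 - u x) * (if \<eta> y = 1 then u y else 1 - u y)
     * (\<Prod>z\<in>S - {x, y}. if \<eta> z = 1 then u z else 1 - u z)" using assms by (simp add: prod.insert)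
  finally show ?thesis .
qed

lemma key_weight:
  assumes S: "finite S" "x \<in> S" "y \<in> S" and e: "\<eta> \<in> configs S"
    and ux: "0 < u x" "u x < 1" and uy: "0 < u y" "u y < 1"
  shows "bern_weight u S (swap_conf \<eta> x y) * s_xy u x y (swap_conf \<eta> x y)
       = bern_weight u S \<eta> * (\<eta> y * (1 - \<eta> x) / ((1 - u x) * u y))"
proof (cases "x = y")
  case True
  have "\<eta> x \<in> {0,1}" using e S by (auto simp: configs_def)
  then show ?thesis using True by (auto simp: s_xy_def swap_conf_def)
next
  case False
  have ex: "\<eta> x \<in> {0,1}" and ey: "\<eta> y \<in> {0,1}" using e S by (auto simp: configs_def)
  have P: "(\<Prod>z\<in>S - {x, y}. if swap_conf \<eta> x y z = 1 then u z else 1 - u z)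
     = (\<Prod>z\<in>S - {x, y}. if \<eta> z = 1 then u z else 1 - u z)"
    by (rule prod.cong) (auto simp: swap_conf_def)
  have sx: "swap_conf \<eta> x y x = \<eta> y" "swap_conf \<eta> x y y = \<eta> x" by (auto simp: swap_conf_def)
  show ?thesis
    unfolding weight_split[OF S False, of u \<eta>] weight_split[OF S False, of u "swap_conf \<eta> x y"] P
    using ex ey ux uy by (auto simp: s_xy_def sx)
qed

lemma core_gen:
  fixes a b p q r s :: real
  assumes a2: "a * a = a" and b2: "b * b = b" and nz: "p \<noteq> 0" "r \<noteq> 0" "q \<noteq> 0" "s \<noteq> 0"
    and r: "r = 1 - p" and s: "s = 1 - q"
  shows "(b - q) / (q * s) - (a - p) / (p * r)
   = b * (1 - a) / (r * q) - a * (1 - b) / (p * s)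
     - (q - p) * ((a - p) / (p * r) * ((b - q) / (q * s)))"
proof -
  have D: "p * r * q * s \<noteq> 0" using nz by simp
  have e1: "((b - q) / (q * s) - (a - p) / (p * r)) * (p * r * q * s)
      = (b - q) * (p * r) - (a - p) * (q * s)"
    using nz by (simp add: field_simps)
  have e2: "(b * (1 - a) / (r * q) - a * (1 - b) / (p * s)
     - (q - p) * ((a - p) / (p * r) * ((b - q) / (q * s)))) * (p * r * q * s)
     = b * (1 - a) * p * s - a * (1 - b) * r * q - (q - p) * (a - p) * (b - q)"
    using nz by (simp add: field_simps)
  have e3: "(b - q) * (p * r) - (a - p) * (q * s)
     = b * (1 - a) * p * s - a * (1 - b) * r * q - (q - p) * (a - p) * (b - q)"
  proof -
    have "a = 0 \<or> a = 1" "b = 0 \<or> b = 1" using a2 b2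
      by (metis mult_cancel_left1 mult_eq_0_iff)+
    then show ?thesis unfolding r s by (elim disjE) (simp_all add: algebra_simps)
  qed
  have "((b - q) / (q * s) - (a - p) / (p * r)) * (p * r * q * s) = (b * (1 - a) / (r * q) - a * (1 - b) / (p * s)
     - (q - p) * ((a - p) / (p * r) * ((b - q) / (q * s)))) * (p * r * q * s)"
    unfolding e1 e2 e3 ..
  then show ?thesis by (rule mult_right_cancel[OF D, THEN iffD1])
qed
lemma core_real:
  fixes a b p q :: real
  assumes "a \<in> {0,1}" "b \<in> {0,1}" "0 < p" "p < 1" "0 < q" "q < 1"
  shows "(b - q) / (q * (1 - q)) - (a - p) / (p * (1 - p))
   = b * (1 - a) / ((1 - p) * q) - a * (1 - b) / (p * (1 - q))
     - (q - p) * ((a - p) / (p * (1 - p)) * ((b - q) / (q * (1 - q))))"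
  by (rule core_gen) (use assms in auto)

theorem lemmaE1:
  fixes n d :: nat and u :: "(nat \<Rightarrow> nat) \<Rightarrow> real"
    and f h :: "((nat \<Rightarrow> nat) \<Rightarrow> real) \<Rightarrow> real" and x y :: "nat \<Rightarrow> nat"
  assumes "n \<ge> 1"
    and "\<forall>z\<in>torus n d. 0 < u z \<and> u z < 1"
    and "\<forall>\<eta>\<in>configs (torus n d). f \<eta> \<ge> 0"
    and "bern_integral u (torus n d) f = 1"
    and "x \<in> torus n d" and "y \<in> torus n d"
    and "\<forall>\<eta>\<in>configs (torus n d). h (swap_conf \<eta> x y) = h \<eta>"
  shows "bern_integral u (torus n d) (\<lambda>\<eta>. h \<eta> * (omega u y \<eta> - omega u x \<eta>) * f \<eta>)
       = bern_integral u (torus n d) (\<lambda>\<eta>. h \<eta> * s_xy u x y \<eta> * grad x y f \<eta>)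
         - (u y - u x) * bern_integral u (torus n d) (\<lambda>\<eta>. h \<eta> * omega u x \<eta> * omega u y \<eta> * f \<eta>)"
proof -
  let ?S = "torus n d"
  let ?C = "configs ?S"
  let ?w = "bern_weight u ?S"
  have fin: "finite ?S" by (rule torus_finite)
  have ux: "0 < u x" "u x < 1" and uy: "0 < u y" "u y < 1" using assms(2,5,6) by auto
  have A: "(\<Sum>\<eta>\<in>?C. ?w \<eta> * h \<eta> * s_xy u x y \<eta> * f (swap_conf \<eta> x y))
      = (\<Sum>\<eta>\<in>?C. ?w \<eta> * h \<eta> * (\<eta> y * (1 - \<eta> x) / ((1 - u x) * u y)) * f \<eta>)"
  proof -
    have "(\<Sum>\<eta>\<in>?C. ?w \<eta> * h \<eta> * s_xy u x y \<eta> * f (swap_conf \<eta> x y))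
       = (\<Sum>\<eta>\<in>?C. ?w (swap_conf \<eta> x y) * h (swap_conf \<eta> x y) * s_xy u x y (swap_conf \<eta> x y)
             * f (swap_conf (swap_conf \<eta> x y) x y))"
      by (rule sum_swap[OF assms(5,6), symmetric])
    also have "\<dots> = (\<Sum>\<eta>\<in>?C. ?w \<eta> * h \<eta> * (\<eta> y * (1 - \<eta> x) / ((1 - u x) * u y)) * f \<eta>)"
    proof (rule sum.cong[OF refl])
      fix \<eta> assume e: "\<eta> \<in> ?C"
      have k1: "?w (swap_conf \<eta> x y) * s_xy u x y (swap_conf \<eta> x y)
         = ?w \<eta> * (\<eta> y * (1 - \<eta> x) / ((1 - u x) * u y))"
        by (rule key_weight) (use fin assms(5,6) e ux uy in auto)
      have k2: "h (swap_conf \<eta> x y) = h \<eta>" using assms(7) e by blast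
      have "?w (swap_conf \<eta> x y) * h (swap_conf \<eta> x y) * s_xy u x y (swap_conf \<eta> x y)
             * f (swap_conf (swap_conf \<eta> x y) x y)
          = (?w (swap_conf \<eta> x y) * s_xy u x y (swap_conf \<eta> x y)) * (h \<eta> * f \<eta>)"
        unfolding k2 swap_swap by (simp only: mult_ac)
      also have "\<dots> = (?w \<eta> * (\<eta> y * (1 - \<eta> x) / ((1 - u x) * u y))) * (h \<eta> * f \<eta>)"
        unfolding k1 ..
      also have "\<dots> = ?w \<eta> * h \<eta> * (\<eta> y * (1 - \<eta> x) / ((1 - u x) * u y)) * f \<eta>"
        by (simp only: mult_ac)
      finally show "?w (swap_conf \<eta> x y) * h (swap_conf \<eta> x y) * s_xy u x y (swap_conf \<eta> x y)
             * f (swap_conf (swap_conf \<eta> x y) x y)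
          = ?w \<eta> * h \<eta> * (\<eta> y * (1 - \<eta> x) / ((1 - u x) * u y)) * f \<eta>" .
    qed
    finally show ?thesis .
  qed
  have pt: "?w \<eta> * (h \<eta> * (omega u y \<eta> - omega u x \<eta>) * f \<eta>)
     = ?w \<eta> * h \<eta> * (\<eta> y * (1 - \<eta> x) / ((1 - u x) * u y)) * f \<eta>
       - ?w \<eta> * h \<eta> * s_xy u x y \<eta> * f \<eta>
       - (u y - u x) * (?w \<eta> * (h \<eta> * omega u x \<eta> * omega u y \<eta> * f \<eta>))"
    if e: "\<eta> \<in> ?C" for \<eta>
  proof -
    have ex: "\<eta> x \<in> {0,1}" and ey: "\<eta> y \<in> {0,1}" using e assms(5,6) by (auto simp: configs_def)
    have nz: "u x \<noteq> 0" "1 - u x \<noteq> 0" "u y \<noteq> 0" "1 - u y \<noteq> 0" using ux uy by auto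
    have core: "(omega u y \<eta> - omega u x \<eta>)
       = (\<eta> y * (1 - \<eta> x) / ((1 - u x) * u y)) - s_xy u x y \<eta>
         - (u y - u x) * (omega u x \<eta> * omega u y \<eta>)"
      unfolding omega_def s_xy_def by (rule core_real) (use ex ey ux uy in auto)
    show ?thesis unfolding core by (simp only: algebra_simps)
  qed
  let ?T = "\<lambda>\<eta>. \<eta> y * (1 - \<eta> x) / ((1 - u x) * u y)"
  have "bern_integral u ?S (\<lambda>\<eta>. h \<eta> * (omega u y \<eta> - omega u x \<eta>) * f \<eta>)
     = (\<Sum>\<eta>\<in>?C. ?w \<eta> * h \<eta> * ?T \<eta> * f \<eta> - ?w \<eta> * h \<eta> * s_xy u x y \<eta> * f \<eta>
       - (u y - u x) * (?w \<eta> * (h \<eta> * omega u x \<eta> * omega u y \<eta> * f \<eta>)))"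
    unfolding bern_integral_def by (rule sum.cong[OF refl]) (rule pt)
  also have "\<dots> = (\<Sum>\<eta>\<in>?C. ?w \<eta> * h \<eta> * ?T \<eta> * f \<eta>) - (\<Sum>\<eta>\<in>?C. ?w \<eta> * h \<eta> * s_xy u x y \<eta> * f \<eta>)
       - (u y - u x) * bern_integral u ?S (\<lambda>\<eta>. h \<eta> * omega u x \<eta> * omega u y \<eta> * f \<eta>)"
    unfolding bern_integral_def by (simp only: sum_subtractf sum_distrib_left)
  also have "(\<Sum>\<eta>\<in>?C. ?w \<eta> * h \<eta> * ?T \<eta> * f \<eta>) - (\<Sum>\<eta>\<in>?C. ?w \<eta> * h \<eta> * s_xy u x y \<eta> * f \<eta>)
     = bern_integral u ?S (\<lambda>\<eta>. h \<eta> * s_xy u x y \<eta> * grad x y f \<eta>)"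
  proof -
    have "bern_integral u ?S (\<lambda>\<eta>. h \<eta> * s_xy u x y \<eta> * grad x y f \<eta>)
       = (\<Sum>\<eta>\<in>?C. ?w \<eta> * h \<eta> * s_xy u x y \<eta> * f (swap_conf \<eta> x y) - ?w \<eta> * h \<eta> * s_xy u x y \<eta> * f \<eta>)"
      unfolding bern_integral_def grad_def by (rule sum.cong[OF refl]) (simp only: algebra_simps)
    also have "\<dots> = (\<Sum>\<eta>\<in>?C. ?w \<eta> * h \<eta> * s_xy u x y \<eta> * f (swap_conf \<eta> x y)) - (\<Sum>\<eta>\<in>?C. ?w \<eta> * h \<eta> * s_xy u x y \<eta> * f \<eta>)"
      by (rule sum_subtractf)
    finally show ?thesis unfolding A by simp
  qed
  finally show ?thesis .
qed

end
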